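(* Consider the coupled opinion–pollution model below, and assume $\beta>1/2$ and that the opinion state is fully synchronized (FS). Let $p_{\max}=Ne_{\max}/(1-\gamma)$ and $p_{\min}=Ne_{\min}/(1-\gamma)$. Then: - $(1,1)$ is an equilibrium in the action space if and only if $p_{\max}\le\bar p$; in this case $(\theta,p)=(\mathbf{1}_N,p_{\max})$ is a stable equilibrium of the coupled dynamics; - $(-1,-1)$ is an equilibrium in the action space if and only if $p_{\min}\ge\bar p$; in this case $(\theta,p)=(-\mathbf{1}_N,p_{\min})$ is a stable equilibrium of the coupled dynamics. Model: $N$ agents $\mathcal{V}=\{1,\dots,N\}$ on a fixed graph, agent $i$ having nonempty neighbor set $\mathcal{N}_i$ with $n_i=|\mathcal{N}_i|$. Actions: $q_i(k)=1$ if $\theta_i(k)>0$ or ($\theta_i(k)=0$ and $q_i(k-1)=1$), $q_i(k)=-1$ if $\theta_i(k)<0$ or ($\theta_i(k)=0$ and $q_i(k-1)=-1$). Emissions: $e_i(k)=e_{\min}$ if $q_i(k)=-1$ and $e_i(k)=e_{\max}$ if $q_i(k)=1$. Pollution: $p(k+1)=\gamma p(k)+\sum_{i=1}^N e_i(k)$ with $\gamma\in(0,1)$. Signal with threshold $\bar p$: $q_p(k)=-1$ if $p(k)>\bar p$ or ($p(k)=\bar p$ and $q_p(k-1)=-1$), and $q_p(k)=1$ if $p(k)<\bar p$ or ($p(k)=\bar p$ and $q_p(k-1)=1$). Opinions: $$\theta_i(k+1)=\theta_i(k)+\bigl(1-\theta_i(k)^2\bigr)\Bigl[\beta\bigl(q_p(k)-\theta_i(k)\bigr)+(1-\beta)\frac{1}{n_i}\sum_{j\in\mathcal{N}_i}\bigl(q_j(k)-\theta_i(k)\bigr)\Bigr],$$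 with $\beta\in[0,1]$, $\theta_i(0)\in(-1,1)\setminus\{0\}$ for all $i$, and $p(0)\ne\bar p$.
   Context: The opinion state $(\theta_1,\dots,\theta_N)$ is fully synchronized (FS) if $\theta_i=\theta_j$ for all $i,j$; this property is preserved in time, so one writes $\theta(k)$ and $q(k)$ for the common opinion and action. In the FS regime the action space is $\mathcal{S}=\{(q,q_p)\}=\{(-1,-1),(-1,1),(1,-1),(1,1)\}$. A point $s\in\mathcal{S}$ is an equilibrium in the action space if whenever $(q(k^* ),q_p(k^* ))=s$ for some $k^*$, then $(q(k),q_p(k))=s$ for all $k>k^*$. $\mathbf{1}_N$ denotes the all-ones vector in $\mathbb{R}^N$. *)

theory Defs
  imports Complex_Main
begin

text \<open>Agents are indexed by 1..N; opinions theta :: time => agent => real.\<close>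

definition act :: "real \<Rightarrow> real \<Rightarrow> real" where
  "act x prev = (if x > 0 then 1 else if x < 0 then -1 else prev)"

definition signal :: "real \<Rightarrow> real \<Rightarrow> real \<Rightarrow> real" where
  "signal pbar x prev = (if x > pbar then -1 else if x < pbar then 1 else prev)"

definition emission :: "real \<Rightarrow> real \<Rightarrow> real \<Rightarrow> real" where
  "emission emin emax a = (if a = 1 then emax else emin)"

definition theta_step :: "(nat \<Rightarrow> nat set) \<Rightarrow> real \<Rightarrow> (nat \<Rightarrow> real) \<Rightarrow> (nat \<Rightarrow> real) \<Rightarrow> real \<Rightarrow> nat \<Rightarrow> real" where
  "theta_step Nb beta th qv qpv i =
     th i + (1 - (th i)^2) * (beta * (qpv - th i)
        + (1 - beta) * ((1 / real (card (Nb i))) * (\<Sum>j\<in>Nb i. qv j - th i)))"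

definition p_step :: "nat \<Rightarrow> real \<Rightarrow> real \<Rightarrow> real \<Rightarrow> real \<Rightarrow> (nat \<Rightarrow> real) \<Rightarrow> real" where
  "p_step N gamma emin emax x qv = gamma * x + (\<Sum>i=1..N. emission emin emax (qv i))"

text \<open>A trajectory of the coupled opinion-pollution model (the memory values at time -1
  are irrelevant since theta_i(0) \<noteq> 0 and p(0) \<noteq> pbar; 0 is used as placeholder).\<close>

definition model_traj ::
  "nat \<Rightarrow> (nat \<Rightarrow> nat set) \<Rightarrow> real \<Rightarrow> real \<Rightarrow> real \<Rightarrow> real \<Rightarrow> real \<Rightarrow>
   (nat \<Rightarrow> nat \<Rightarrow> real) \<Rightarrow> (nat \<Rightarrow> real) \<Rightarrow> (nat \<Rightarrow> nat \<Rightarrow> real) \<Rightarrow> (nat \<Rightarrow> real) \<Rightarrow> bool" where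
  "model_traj N Nb beta gamma emin emax pbar th p q qp \<longleftrightarrow>
     (\<forall>i\<in>{1..N}. -1 < th 0 i \<and> th 0 i < 1 \<and> th 0 i \<noteq> 0) \<and> p 0 \<noteq> pbar \<and>
     (\<forall>i\<in>{1..N}. q 0 i = act (th 0 i) 0) \<and> qp 0 = signal pbar (p 0) 0 \<and>
     (\<forall>k. \<forall>i\<in>{1..N}. q (Suc k) i = act (th (Suc k) i) (q k i)) \<and>
     (\<forall>k. qp (Suc k) = signal pbar (p (Suc k)) (qp k)) \<and>
     (\<forall>k. p (Suc k) = p_step N gamma emin emax (p k) (q k)) \<and>
     (\<forall>k. \<forall>i\<in>{1..N}. th (Suc k) i = theta_step Nb beta (th k) (q k) (qp k) i)"

definition fully_synchronized :: "nat \<Rightarrow> (nat \<Rightarrow> real) \<Rightarrow> bool" where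
  "fully_synchronized N x \<longleftrightarrow> (\<forall>i\<in>{1..N}. \<forall>j\<in>{1..N}. x i = x j)"

definition actions_are :: "nat \<Rightarrow> (nat \<Rightarrow> nat \<Rightarrow> real) \<Rightarrow> (nat \<Rightarrow> real) \<Rightarrow> nat \<Rightarrow> real \<Rightarrow> real \<Rightarrow> bool" where
  "actions_are N q qp k a b \<longleftrightarrow> (\<forall>i\<in>{1..N}. q k i = a) \<and> qp k = b"

definition action_equilibrium ::
  "nat \<Rightarrow> (nat \<Rightarrow> nat set) \<Rightarrow> real \<Rightarrow> real \<Rightarrow> real \<Rightarrow> real \<Rightarrow> real \<Rightarrow> real \<Rightarrow> real \<Rightarrow> bool" where
  "action_equilibrium N Nb beta gamma emin emax pbar a b \<longleftrightarrow>
     (\<forall>th p q qp. model_traj N Nb beta gamma emin emax pbar th p q qp \<and> fully_synchronized N (th 0) \<longrightarrow>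
        (\<forall>k0. actions_are N q qp k0 a b \<longrightarrow> (\<forall>k>k0. actions_are N q qp k a b)))"

text \<open>(thE, pE) together with the actions (a,b) (as the memory of the hysteresis) is a
  fixed point of the coupled dynamics.\<close>
definition coupled_fixed_point ::
  "nat \<Rightarrow> (nat \<Rightarrow> nat set) \<Rightarrow> real \<Rightarrow> real \<Rightarrow> real \<Rightarrow> real \<Rightarrow> real \<Rightarrow> (nat \<Rightarrow> real) \<Rightarrow> real \<Rightarrow> real \<Rightarrow> real \<Rightarrow> bool" where
  "coupled_fixed_point N Nb beta gamma emin emax pbar thE pE a b \<longleftrightarrow>
     (\<forall>i\<in>{1..N}. act (thE i) a = a \<and> theta_step Nb beta thE (\<lambda>_. a) b i = thE i) \<and>
     signal pbar pE b = b \<and> p_step N gamma emin emax pE (\<lambda>_. a) = pE"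

definition lyapunov_stable ::
  "nat \<Rightarrow> (nat \<Rightarrow> nat set) \<Rightarrow> real \<Rightarrow> real \<Rightarrow> real \<Rightarrow> real \<Rightarrow> real \<Rightarrow> (nat \<Rightarrow> real) \<Rightarrow> real \<Rightarrow> real \<Rightarrow> real \<Rightarrow> bool" where
  "lyapunov_stable N Nb beta gamma emin emax pbar thE pE a b \<longleftrightarrow>
     (\<forall>\<epsilon>>0. \<exists>\<delta>>0. \<forall>th p q qp k0.
        model_traj N Nb beta gamma emin emax pbar th p q qp \<and> fully_synchronized N (th 0) \<and>
        actions_are N q qp k0 a b \<and>
        (\<forall>i\<in>{1..N}. \<bar>th k0 i - thE i\<bar> < \<delta>) \<and> \<bar>p k0 - pE\<bar> < \<delta> \<longrightarrow>
        (\<forall>k\<ge>k0. (\<forall>i\<in>{1..N}. \<bar>th k i - thE i\<bar> < \<epsilon>) \<and> \<bar>p k - pE\<bar> < \<epsilon>))"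

definition stable_equilibrium ::
  "nat \<Rightarrow> (nat \<Rightarrow> nat set) \<Rightarrow> real \<Rightarrow> real \<Rightarrow> real \<Rightarrow> real \<Rightarrow> real \<Rightarrow> (nat \<Rightarrow> real) \<Rightarrow> real \<Rightarrow> real \<Rightarrow> real \<Rightarrow> bool" where
  "stable_equilibrium N Nb beta gamma emin emax pbar thE pE a b \<longleftrightarrow>
     coupled_fixed_point N Nb beta gamma emin emax pbar thE pE a b \<and>
     lyapunov_stable N Nb beta gamma emin emax pbar thE pE a b"

end

theory Submission
  imports Defs
begin

lemma step_form:
  assumes "finite (Nb i)" "Nb i \<noteq> {}"
  shows "theta_step Nb beta th qv qpv i = th i + (1 - (th i)^2) *
     (beta*qpv + (1-beta)*((\<Sum>j\<in>Nb i. qv j)/card(Nb i)) - th i)"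
proof -
  have c: "real (card (Nb i)) > 0" using assms by (simp add: card_gt_0_iff)
  have e1: "(\<Sum>j\<in>Nb i. qv j - th i) = (\<Sum>j\<in>Nb i. qv j) - card (Nb i) * th i"
    by (simp add: sum_subtractf)
  have e2: "(1 / real (card (Nb i))) * ((\<Sum>j\<in>Nb i. qv j) - card (Nb i) * th i)
     = (\<Sum>j\<in>Nb i. qv j)/card(Nb i) - th i" using c by (simp add: field_simps)
  show ?thesis unfolding theta_step_def e1 e2 by (simp add: algebra_simps)
qed

lemma f_bounds:
  fixes x c :: real
  assumes "-1 \<le> x" "x \<le> 1" "-1 \<le> c" "c \<le> 1"
  shows "-1 \<le> x + (1-x^2)*(c-x) \<and> x + (1-x^2)*(c-x) \<le> 1"
proof
  have e1: "x + (1-x^2)*(c-x) - 1 = (1-x)*((1+x)*(c-x) - 1)" by (simp add: algebra_simps power2_eq_square)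
  have "(1+x)*(c-x) \<le> (1+x)*(1-x)" using assms by (intro mult_left_mono) auto
  also have "\<dots> \<le> 1" by (simp add: algebra_simps)
  finally have "(1-x)*((1+x)*(c-x) - 1) \<le> 0" using assms by (intro mult_nonneg_nonpos) auto
  with e1 show "x + (1-x^2)*(c-x) \<le> 1" by linarith
  have e2: "x + (1-x^2)*(c-x) + 1 = (1+x)*(1 + (1-x)*(c-x))" by (simp add: algebra_simps power2_eq_square)
  have "(1-x)*(-1-x) \<le> (1-x)*(c-x)" using assms by (intro mult_left_mono) auto
  moreover have "(1-x)*(-1-x) \<ge> -1" by (simp add: algebra_simps)
  ultimately have "(1+x)*(1 + (1-x)*(c-x)) \<ge> 0" using assms by (intro mult_nonneg_nonneg) auto
  with e2 show "-1 \<le> x + (1-x^2)*(c-x)" by linarith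
qed

lemma avg_bounds:
  fixes f :: "nat \<Rightarrow> real"
  assumes "finite S" "S \<noteq> {}" "\<forall>j\<in>S. \<bar>f j\<bar> \<le> 1"
  shows "\<bar>(\<Sum>j\<in>S. f j) / card S\<bar> \<le> 1"
proof -
  have c: "real (card S) > 0" using assms by (simp add: card_gt_0_iff)
  have "\<bar>\<Sum>j\<in>S. f j\<bar> \<le> (\<Sum>j\<in>S. \<bar>f j\<bar>)" by (rule sum_abs)
  also have "\<dots> \<le> (\<Sum>j\<in>S. 1)" using assms by (intro sum_mono) auto
  also have "(\<Sum>j\<in>S. (1::real)) = real (card S)" by simp
  finally have le: "\<bar>\<Sum>j\<in>S. f j\<bar> \<le> real (card S)" .
  have "\<bar>(\<Sum>j\<in>S. f j) / real (card S)\<bar> = \<bar>\<Sum>j\<in>S. f j\<bar> / real (card S)"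
    by (simp only: abs_divide abs_of_nat)
  also have "\<dots> \<le> 1" using c le by (simp only: pos_divide_le_eq mult_1) 
  finally show ?thesis .
qed

lemma c_bounds:
  fixes b a d :: real
  assumes "0 \<le> b" "b \<le> 1" "\<bar>a\<bar> \<le> 1" "\<bar>d\<bar> \<le> 1"
  shows "\<bar>b*a + (1-b)*d\<bar> \<le> 1"
proof -
  have "\<bar>b*a + (1-b)*d\<bar> \<le> \<bar>b*a\<bar> + \<bar>(1-b)*d\<bar>" by (rule abs_triangle_ineq)
  also have "\<dots> = b*\<bar>a\<bar> + (1-b)*\<bar>d\<bar>" using assms by (simp add: abs_mult)
  also have "\<dots> \<le> b*1 + (1-b)*1" using assms by (intro add_mono mult_left_mono) auto
  finally show ?thesis by simp
qed

lemma act_abs: "\<bar>prev\<bar> \<le> 1 \<Longrightarrow> \<bar>act x prev\<bar> \<le> 1" by (simp add: act_def)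
lemma signal_abs: "\<bar>prev\<bar> \<le> 1 \<Longrightarrow> \<bar>signal pb x prev\<bar> \<le> 1" by (simp add: signal_def)

lemma invariant:
  assumes mt: "model_traj N Nb beta gamma emin emax pbar th p q qp"
    and Nb: "\<forall>i\<in>{1..N}. Nb i \<subseteq> {1..N} \<and> Nb i \<noteq> {}"
    and b: "0 \<le> beta" "beta \<le> 1"
  shows "(\<forall>i\<in>{1..N}. \<bar>q k i\<bar> \<le> 1 \<and> \<bar>th k i\<bar> \<le> 1) \<and> \<bar>qp k\<bar> \<le> 1"
proof (induction k)
  case 0
  then show ?case using mt unfolding model_traj_def by (auto intro: act_abs signal_abs)
next
  case (Suc k)
  have th: "\<bar>th (Suc k) i\<bar> \<le> 1" if i: "i \<in> {1..N}" for i
  proof -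
    have fin: "finite (Nb i)" "Nb i \<noteq> {}" using Nb i finite_subset[of "Nb i" "{1..N}"] by auto
    have av: "\<bar>(\<Sum>j\<in>Nb i. q k j)/card(Nb i)\<bar> \<le> 1"
    proof (rule avg_bounds[OF fin])
      show "\<forall>j\<in>Nb i. \<bar>q k j\<bar> \<le> 1" using Suc.IH Nb i by blast
    qed
    have cb: "\<bar>beta*qp k + (1-beta)*((\<Sum>j\<in>Nb i. q k j)/card(Nb i))\<bar> \<le> 1"
      using Suc.IH av b by (intro c_bounds) auto
    have "th (Suc k) i = theta_step Nb beta (th k) (q k) (qp k) i" using mt i unfolding model_traj_def by auto
    also have "\<dots> = th k i + (1 - (th k i)^2) * (beta*qp k + (1-beta)*((\<Sum>j\<in>Nb i. q k j)/card(Nb i)) - th k i)"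
      using fin by (rule step_form)
    finally show ?thesis using f_bounds[of "th k i" "beta*qp k + (1-beta)*((\<Sum>j\<in>Nb i. q k j)/card(Nb i))"]
      Suc.IH i cb by (auto simp: abs_le_iff)
  qed
  moreover have "\<bar>q (Suc k) i\<bar> \<le> 1" if i: "i \<in> {1..N}" for i
    using mt i Suc.IH unfolding model_traj_def by (auto intro: act_abs)
  moreover have "\<bar>qp (Suc k)\<bar> \<le> 1"
    using mt Suc.IH unfolding model_traj_def by (auto intro: signal_abs)
  ultimately show ?case by auto
qed

lemma act_prev:
  assumes mt: "model_traj N Nb beta gamma emin emax pbar th p q qp" and i: "i \<in> {1..N}"
  shows "\<exists>prev. q k i = act (th k i) prev"
  using mt i unfolding model_traj_def by (cases k) auto

lemma sig_prev:
  assumes mt: "model_traj N Nb beta gamma emin emax pbar th p q qp"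
  shows "\<exists>prev. qp k = signal pbar (p k) prev"
  using mt unfolding model_traj_def by (cases k) auto

lemma sum_emis1: "\<forall>i\<in>{1..N}. qv i = (1::real) \<Longrightarrow> (\<Sum>i=1..N. emission emin emax (qv i)) = real N * emax"
  by (simp add: emission_def)

lemma sum_emism: "\<forall>i\<in>{1..N}. qv i = (-1::real) \<Longrightarrow> (\<Sum>i=1..N. emission emin emax (qv i)) = real N * emin"
  by (simp add: emission_def)

lemma avg_const:
  fixes S :: "nat set" and N :: nat
  assumes "S \<subseteq> {1..N}" "S \<noteq> {}" "\<forall>j\<in>{1..N}. qv j = (a::real)"
  shows "(\<Sum>j\<in>S. qv j)/card S = a"
proof -
  have f: "finite S" using finite_subset[OF assms(1)] by simp
  have c: "real (card S) \<noteq> 0" using f assms(2) by simp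
  have "(\<Sum>j\<in>S. qv j) = (\<Sum>j\<in>S. a)"
  proof (rule sum.cong)
    fix x assume "x \<in> S" then show "qv x = a" using assms(1,3) by blast
  qed simp
  also have "\<dots> = real (card S) * a" by simp
  finally show ?thesis using c by simp
qed

lemma dyn:
  assumes mt: "model_traj N Nb beta gamma emin emax pbar th p q qp"
    and Nb: "\<forall>i\<in>{1..N}. Nb i \<subseteq> {1..N} \<and> Nb i \<noteq> {}"
    and ac: "actions_are N q qp k a a" and i: "i \<in> {1..N}"
  shows "th (Suc k) i = th k i + (1 - (th k i)^2) * (a - th k i)"
proof -
  have fin: "finite (Nb i)" "Nb i \<noteq> {}" using Nb i finite_subset[of "Nb i" "{1..N}"] by auto
  have av: "(\<Sum>j\<in>Nb i. q k j)/card(Nb i) = a"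
    using Nb i ac unfolding actions_are_def by (intro avg_const[of _ N]) auto
  have "th (Suc k) i = theta_step Nb beta (th k) (q k) (qp k) i" using mt i unfolding model_traj_def by auto
  also have "\<dots> = th k i + (1 - (th k i)^2) * (beta*qp k + (1-beta)*((\<Sum>j\<in>Nb i. q k j)/card(Nb i)) - th k i)"
    using fin by (rule step_form)
  finally show ?thesis using ac unfolding av actions_are_def by (simp add: algebra_simps)
qed

lemma pdyn:
  assumes mt: "model_traj N Nb beta gamma emin emax pbar th p q qp"
  shows "p (Suc k) = gamma * p k + (\<Sum>i=1..N. emission emin emax (q k i))"
  using mt unfolding model_traj_def p_step_def by auto

lemma fwd1:
  assumes mt: "model_traj N Nb beta gamma emin emax pbar th p q qp"
    and Nb: "\<forall>i\<in>{1..N}. Nb i \<subseteq> {1..N} \<and> Nb i \<noteq> {}"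
    and b: "0 \<le> beta" "beta \<le> 1" and g: "0 < gamma" "gamma < 1"
    and pm: "real N * emax \<le> (1-gamma)*pbar"
    and ac: "actions_are N q qp k0 1 1"
  shows "actions_are N q qp (k0+m) 1 1"
proof (induction m)
  case 0 then show ?case using ac by simp
next
  case (Suc m)
  define k where "k = k0 + m"
  have IH: "actions_are N q qp k 1 1" using Suc.IH k_def by simp
  have "q (Suc k) i = 1" if i: "i \<in> {1..N}" for i
  proof -
    have d: "th (Suc k) i = th k i + (1 - (th k i)^2) * (1 - th k i)" using dyn[OF mt Nb IH i] by simp
    have qk: "q k i = 1" using IH i unfolding actions_are_def by auto
    obtain pr where "q k i = act (th k i) pr" using act_prev[OF mt i] by blast
    then have t0: "th k i \<ge> 0" using qk unfolding act_def by (auto split: if_splits)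
    have t1: "\<bar>th k i\<bar> \<le> 1" using invariant[OF mt Nb b] i by blast
    have "(1 - (th k i)^2) * (1 - th k i) \<ge> 0"
    proof (rule mult_nonneg_nonneg)
      have "(th k i)^2 \<le> 1" using t1 by (simp add: abs_square_le_1)
      then show "0 \<le> 1 - (th k i)^2" by simp
    qed (use t1 in auto)
    then have "th (Suc k) i \<ge> 0" using d t0 by linarith
    moreover have "q (Suc k) i = act (th (Suc k) i) (q k i)" using mt i unfolding model_traj_def by auto
    ultimately show ?thesis using qk unfolding act_def by auto
  qed
  moreover have "qp (Suc k) = 1"
  proof -
    obtain pr where "qp k = signal pbar (p k) pr" using sig_prev[OF mt] by blast
    then have "p k \<le> pbar" using IH unfolding actions_are_def signal_def by (auto split: if_splits)
    then have "gamma * p k \<le> gamma * pbar" using g by (intro mult_left_mono) auto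
    moreover have "p (Suc k) = gamma * p k + real N * emax"
      using pdyn[OF mt, of k] sum_emis1[of N "q k"] IH unfolding actions_are_def by simp
    ultimately have "p (Suc k) \<le> pbar" using pm by (simp add: algebra_simps)
    moreover have "qp (Suc k) = signal pbar (p (Suc k)) (qp k)" using mt unfolding model_traj_def by auto
    ultimately show ?thesis using IH unfolding actions_are_def signal_def by auto
  qed
  ultimately show ?case unfolding actions_are_def k_def by simp
qed

lemma fwdm:
  assumes mt: "model_traj N Nb beta gamma emin emax pbar th p q qp"
    and Nb: "\<forall>i\<in>{1..N}. Nb i \<subseteq> {1..N} \<and> Nb i \<noteq> {}"
    and b: "0 \<le> beta" "beta \<le> 1" and g: "0 < gamma" "gamma < 1"
    and pm: "real N * emin \<ge> (1-gamma)*pbar"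
    and ac: "actions_are N q qp k0 (-1) (-1)"
  shows "actions_are N q qp (k0+m) (-1) (-1)"
proof (induction m)
  case 0 then show ?case using ac by simp
next
  case (Suc m)
  define k where "k = k0 + m"
  have IH: "actions_are N q qp k (-1) (-1)" using Suc.IH k_def by simp
  have "q (Suc k) i = -1" if i: "i \<in> {1..N}" for i
  proof -
    have d: "th (Suc k) i = th k i + (1 - (th k i)^2) * (-1 - th k i)" using dyn[OF mt Nb IH i] by simp
    have qk: "q k i = -1" using IH i unfolding actions_are_def by auto
    obtain pr where "q k i = act (th k i) pr" using act_prev[OF mt i] by blast
    then have t0: "th k i \<le> 0" using qk unfolding act_def by (auto split: if_splits)
    have t1: "\<bar>th k i\<bar> \<le> 1" using invariant[OF mt Nb b] i by blast
    have "(1 - (th k i)^2) * (1 + th k i) \<ge> 0"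
    proof (rule mult_nonneg_nonneg)
      have "(th k i)^2 \<le> 1" using t1 by (simp add: abs_square_le_1)
      then show "0 \<le> 1 - (th k i)^2" by simp
    qed (use t1 in auto)
    then have "th (Suc k) i \<le> 0" using d t0 by (simp add: algebra_simps)
    moreover have "q (Suc k) i = act (th (Suc k) i) (q k i)" using mt i unfolding model_traj_def by auto
    ultimately show ?thesis using qk unfolding act_def by auto
  qed
  moreover have "qp (Suc k) = -1"
  proof -
    obtain pr where "qp k = signal pbar (p k) pr" using sig_prev[OF mt] by blast
    then have "p k \<ge> pbar" using IH unfolding actions_are_def signal_def by (auto split: if_splits)
    then have "gamma * p k \<ge> gamma * pbar" using g by (intro mult_left_mono) auto
    moreover have "p (Suc k) = gamma * p k + real N * emin"
      using pdyn[OF mt, of k] sum_emism[of N "q k"] IH unfolding actions_are_def by simp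
    ultimately have "p (Suc k) \<ge> pbar" using pm by (simp add: algebra_simps)
    moreover have "qp (Suc k) = signal pbar (p (Suc k)) (qp k)" using mt unfolding model_traj_def by auto
    ultimately show ?thesis using IH unfolding actions_are_def signal_def by auto
  qed
  ultimately show ?case unfolding actions_are_def k_def by simp
qed

lemma nonneg_help:
  fixes x :: real assumes "\<bar>x\<bar> \<le> 1"
  shows "(1 - x^2) * (1 - x) \<ge> 0" "(1 - x^2) * (1 + x) \<ge> 0"
proof -
  have "x^2 \<le> 1" using assms by (simp add: abs_square_le_1)
  then show "(1 - x^2) * (1 - x) \<ge> 0" "(1 - x^2) * (1 + x) \<ge> 0"
    using assms by (auto intro!: mult_nonneg_nonneg)
qed

lemma stab1:
  assumes mt: "model_traj N Nb beta gamma emin emax pbar th p q qp"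
    and Nb: "\<forall>i\<in>{1..N}. Nb i \<subseteq> {1..N} \<and> Nb i \<noteq> {}"
    and b: "0 \<le> beta" "beta \<le> 1" and g: "0 < gamma" "gamma < 1"
    and pm: "real N * emax \<le> (1-gamma)*pbar"
    and ac: "actions_are N q qp k0 1 1"
    and pE: "pE = real N * emax / (1 - gamma)"
  shows "(\<forall>i\<in>{1..N}. th k0 i \<le> th (k0+m) i \<and> th (k0+m) i \<le> 1) \<and> \<bar>p (k0+m) - pE\<bar> \<le> \<bar>p k0 - pE\<bar>"
proof (induction m)
  case 0 then show ?case using invariant[OF mt Nb b] by (auto simp: abs_le_iff)
next
  case (Suc m)
  define k where "k = k0 + m"
  have IH: "(\<forall>i\<in>{1..N}. th k0 i \<le> th k i \<and> th k i \<le> 1) \<and> \<bar>p k - pE\<bar> \<le> \<bar>p k0 - pE\<bar>"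
    using Suc.IH k_def by simp
  have ack: "actions_are N q qp k 1 1" using fwd1[OF mt Nb b g pm ac] k_def by simp
  have "th k0 i \<le> th (Suc k) i \<and> th (Suc k) i \<le> 1" if i: "i \<in> {1..N}" for i
  proof -
    have d: "th (Suc k) i = th k i + (1 - (th k i)^2) * (1 - th k i)" using dyn[OF mt Nb ack i] by simp
    have t1: "\<bar>th k i\<bar> \<le> 1" using invariant[OF mt Nb b] i by blast
    have t2: "\<bar>th (Suc k) i\<bar> \<le> 1" using invariant[OF mt Nb b] i by blast
    have t3: "th k0 i \<le> th k i" using IH i by blast
    show ?thesis using d nonneg_help(1)[OF t1] t3 t2 by (auto simp: abs_le_iff)
  qed
  moreover have "\<bar>p (Suc k) - pE\<bar> \<le> \<bar>p k0 - pE\<bar>"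
  proof -
    have "p (Suc k) = gamma * p k + real N * emax"
      using pdyn[OF mt, of k] sum_emis1[of N "q k"] ack unfolding actions_are_def by simp
    moreover have "real N * emax = (1 - gamma) * pE" using pE g by simp
    ultimately have "p (Suc k) - pE = gamma * (p k - pE)" by (simp add: algebra_simps)
    then have "\<bar>p (Suc k) - pE\<bar> = gamma * \<bar>p k - pE\<bar>" using g by (simp add: abs_mult)
    also have "\<dots> \<le> \<bar>p k - pE\<bar>" using g by (intro mult_left_le_one_le) auto
    finally show ?thesis using IH by linarith
  qed
  ultimately show ?case unfolding k_def by simp
qed

lemma stabm:
  assumes mt: "model_traj N Nb beta gamma emin emax pbar th p q qp"
    and Nb: "\<forall>i\<in>{1..N}. Nb i \<subseteq> {1..N} \<and> Nb i \<noteq> {}"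
    and b: "0 \<le> beta" "beta \<le> 1" and g: "0 < gamma" "gamma < 1"
    and pm: "real N * emin \<ge> (1-gamma)*pbar"
    and ac: "actions_are N q qp k0 (-1) (-1)"
    and pE: "pE = real N * emin / (1 - gamma)"
  shows "(\<forall>i\<in>{1..N}. th (k0+m) i \<le> th k0 i \<and> -1 \<le> th (k0+m) i) \<and> \<bar>p (k0+m) - pE\<bar> \<le> \<bar>p k0 - pE\<bar>"
proof (induction m)
  case 0 then show ?case using invariant[OF mt Nb b] by (auto simp: abs_le_iff)
next
  case (Suc m)
  define k where "k = k0 + m"
  have IH: "(\<forall>i\<in>{1..N}. th k i \<le> th k0 i \<and> -1 \<le> th k i) \<and> \<bar>p k - pE\<bar> \<le> \<bar>p k0 - pE\<bar>"
    using Suc.IH k_def by simp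
  have ack: "actions_are N q qp k (-1) (-1)" using fwdm[OF mt Nb b g pm ac] k_def by simp
  have "th (Suc k) i \<le> th k0 i \<and> -1 \<le> th (Suc k) i" if i: "i \<in> {1..N}" for i
  proof -
    have d: "th (Suc k) i = th k i - (1 - (th k i)^2) * (1 + th k i)" using dyn[OF mt Nb ack i] by (simp add: algebra_simps)
    have t1: "\<bar>th k i\<bar> \<le> 1" using invariant[OF mt Nb b] i by blast
    have t2: "\<bar>th (Suc k) i\<bar> \<le> 1" using invariant[OF mt Nb b] i by blast
    have t3: "th k i \<le> th k0 i" using IH i by blast
    show ?thesis using d nonneg_help(2)[OF t1] t3 t2 by (auto simp: abs_le_iff)
  qed
  moreover have "\<bar>p (Suc k) - pE\<bar> \<le> \<bar>p k0 - pE\<bar>"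
  proof -
    have "p (Suc k) = gamma * p k + real N * emin"
      using pdyn[OF mt, of k] sum_emism[of N "q k"] ack unfolding actions_are_def by simp
    moreover have "real N * emin = (1 - gamma) * pE" using pE g by simp
    ultimately have "p (Suc k) - pE = gamma * (p k - pE)" by (simp add: algebra_simps)
    then have "\<bar>p (Suc k) - pE\<bar> = gamma * \<bar>p k - pE\<bar>" using g by (simp add: abs_mult)
    also have "\<dots> \<le> \<bar>p k - pE\<bar>" using g by (intro mult_left_le_one_le) auto
    finally show ?thesis using IH by linarith
  qed
  ultimately show ?case unfolding k_def by simp
qed

primrec sim :: "nat \<Rightarrow> (nat \<Rightarrow> nat set) \<Rightarrow> real \<Rightarrow> real \<Rightarrow> real \<Rightarrow> real \<Rightarrow> real \<Rightarrow> (nat \<Rightarrow> real) \<Rightarrow> real \<Rightarrow> nat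
   \<Rightarrow> (nat \<Rightarrow> real) \<times> real \<times> (nat \<Rightarrow> real) \<times> real" where
  "sim N Nb beta gamma emin emax pbar th0 p0 0 = (th0, p0, \<lambda>i. act (th0 i) 0, signal pbar p0 0)"
| "sim N Nb beta gamma emin emax pbar th0 p0 (Suc k) =
    (let s = sim N Nb beta gamma emin emax pbar th0 p0 k;
         th' = (\<lambda>i. theta_step Nb beta (fst s) (fst (snd (snd s))) (snd (snd (snd s))) i);
         p' = p_step N gamma emin emax (fst (snd s)) (fst (snd (snd s)))
     in (th', p', \<lambda>i. act (th' i) (fst (snd (snd s)) i), signal pbar p' (snd (snd (snd s)))))"

lemma sim_traj:
  assumes "\<forall>i\<in>{1..N}. -1 < th0 i \<and> th0 i < 1 \<and> th0 i \<noteq> 0" "p0 \<noteq> pbar"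
  shows "model_traj N Nb beta gamma emin emax pbar
     (\<lambda>k. fst (sim N Nb beta gamma emin emax pbar th0 p0 k))
     (\<lambda>k. fst (snd (sim N Nb beta gamma emin emax pbar th0 p0 k)))
     (\<lambda>k. fst (snd (snd (sim N Nb beta gamma emin emax pbar th0 p0 k))))
     (\<lambda>k. snd (snd (snd (sim N Nb beta gamma emin emax pbar th0 p0 k))))"
  using assms unfolding model_traj_def by (simp add: Let_def)

lemma ae_use:
  assumes "action_equilibrium N Nb beta gamma emin emax pbar a b"
    "model_traj N Nb beta gamma emin emax pbar th p q qp" "fully_synchronized N (th 0)"
    "actions_are N q qp k0 a b" "k0 < k"
  shows "actions_are N q qp k a b"
  using assms unfolding action_equilibrium_def by blast

lemma cex1:
  assumes g: "0 < gamma" "gamma < 1" and D: "real N * emax > (1-gamma)*pbar"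
  shows "\<not> action_equilibrium N Nb beta gamma emin emax pbar 1 1"
proof
  assume ae: "action_equilibrium N Nb beta gamma emin emax pbar 1 1"
  define D where "D = real N * emax - (1-gamma)*pbar"
  have Dp: "D > 0" using D D_def by simp
  define p0 where "p0 = pbar - D/2"
  define th0 :: "nat \<Rightarrow> real" where "th0 = (\<lambda>_. 1/2)"
  let ?s = "sim N Nb beta gamma emin emax pbar th0 p0"
  have mt: "model_traj N Nb beta gamma emin emax pbar (\<lambda>k. fst (?s k)) (\<lambda>k. fst (snd (?s k)))
     (\<lambda>k. fst (snd (snd (?s k)))) (\<lambda>k. snd (snd (snd (?s k))))"
    using Dp by (intro sim_traj) (auto simp: th0_def p0_def)
  have fs: "fully_synchronized N (fst (?s 0))" by (simp add: fully_synchronized_def th0_def)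
  have a0: "actions_are N (\<lambda>k. fst (snd (snd (?s k)))) (\<lambda>k. snd (snd (snd (?s k)))) 0 1 1"
    using Dp by (simp add: actions_are_def th0_def act_def signal_def p0_def)
  have q0: "fst (snd (snd (?s 0))) = (\<lambda>_. 1)" by (simp add: th0_def act_def)
  have p1: "fst (snd (?s 1)) = gamma * p0 + real N * emax"
    by (simp add: Let_def p_step_def th0_def act_def emission_def)
  have "gamma * p0 + real N * emax > pbar"
  proof -
    have "gamma * p0 + real N * emax = pbar + D - gamma * D / 2" unfolding p0_def D_def by (simp add: algebra_simps)
    moreover have "gamma * D / 2 < D" using g Dp by simp
    ultimately show ?thesis by simp
  qed
  then have sg: "signal pbar (gamma * p0 + real N * emax) 1 = -1" by (simp add: signal_def)
  have e: "snd (snd (snd (?s 1))) = signal pbar (fst (snd (?s 1))) (snd (snd (snd (?s 0))))"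
    by (simp add: Let_def)
  have qp0: "snd (snd (snd (?s 0))) = 1" using Dp by (simp add: signal_def p0_def)
  have "snd (snd (snd (?s 1))) = signal pbar (gamma * p0 + real N * emax) 1"
    unfolding e p1 qp0 by (rule refl)
  also note sg
  finally have m1: "snd (snd (snd (?s 1))) = -1" .
  have "actions_are N (\<lambda>k. fst (snd (snd (?s k)))) (\<lambda>k. snd (snd (snd (?s k)))) 1 1 1"
    by (rule ae_use[OF ae mt fs a0]) simp
  then have p1': "snd (snd (snd (?s 1))) = 1" unfolding actions_are_def by (rule conjunct2)
  have "(1::real) = -1" using trans[OF sym[OF p1'] m1] .
  then show False by simp
qed

lemma cexm:
  assumes g: "0 < gamma" "gamma < 1" and D: "real N * emin < (1-gamma)*pbar"
  shows "\<not> action_equilibrium N Nb beta gamma emin emax pbar (-1) (-1)"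
proof
  assume ae: "action_equilibrium N Nb beta gamma emin emax pbar (-1) (-1)"
  define D where "D = (1-gamma)*pbar - real N * emin"
  have Dp: "D > 0" using D D_def by simp
  define p0 where "p0 = pbar + D/2"
  define th0 :: "nat \<Rightarrow> real" where "th0 = (\<lambda>_. -1/2)"
  let ?s = "sim N Nb beta gamma emin emax pbar th0 p0"
  have mt: "model_traj N Nb beta gamma emin emax pbar (\<lambda>k. fst (?s k)) (\<lambda>k. fst (snd (?s k)))
     (\<lambda>k. fst (snd (snd (?s k)))) (\<lambda>k. snd (snd (snd (?s k))))"
    using Dp by (intro sim_traj) (auto simp: th0_def p0_def)
  have fs: "fully_synchronized N (fst (?s 0))" by (simp add: fully_synchronized_def th0_def)
  have a0: "actions_are N (\<lambda>k. fst (snd (snd (?s k)))) (\<lambda>k. snd (snd (snd (?s k)))) 0 (-1) (-1)"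
    using Dp by (simp add: actions_are_def th0_def act_def signal_def p0_def)
  have q0: "fst (snd (snd (?s 0))) = (\<lambda>_. -1)" by (simp add: th0_def act_def)
  have p1: "fst (snd (?s 1)) = gamma * p0 + real N * emin"
    by (simp add: Let_def p_step_def th0_def act_def emission_def)
  have "gamma * p0 + real N * emin < pbar"
  proof -
    have "gamma * p0 + real N * emin = pbar - D + gamma * D / 2" unfolding p0_def D_def by (simp add: algebra_simps)
    moreover have "gamma * D / 2 < D" using g Dp by simp
    ultimately show ?thesis by simp
  qed
  then have sg: "signal pbar (gamma * p0 + real N * emin) (-1) = 1" by (simp add: signal_def)
  have e: "snd (snd (snd (?s 1))) = signal pbar (fst (snd (?s 1))) (snd (snd (snd (?s 0))))"
    by (simp add: Let_def)
  have qp0: "snd (snd (snd (?s 0))) = -1" using Dp by (simp add: signal_def p0_def)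
  have "snd (snd (snd (?s 1))) = signal pbar (gamma * p0 + real N * emin) (-1)"
    unfolding e p1 qp0 by (rule refl)
  also note sg
  finally have m1: "snd (snd (snd (?s 1))) = 1" .
  have "actions_are N (\<lambda>k. fst (snd (snd (?s k)))) (\<lambda>k. snd (snd (snd (?s k)))) 1 (-1) (-1)"
    by (rule ae_use[OF ae mt fs a0]) simp
  then have p1': "snd (snd (snd (?s 1))) = -1" unfolding actions_are_def by (rule conjunct2)
  have "(-1::real) = 1" using trans[OF sym[OF p1'] m1] .
  then show False by simp
qed

theorem mainTheorem8:
  fixes N :: nat and Nb :: "nat \<Rightarrow> nat set"
    and beta gamma emin emax pbar pmax pmin :: real
  assumes N: "N \<ge> 1"
    and Nb: "\<forall>i\<in>{1..N}. Nb i \<subseteq> {1..N} \<and> Nb i \<noteq> {}"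
    and gamma: "0 < gamma" "gamma < 1"
    and beta: "1/2 < beta" "beta \<le> 1"
    and pmax_def: "pmax = real N * emax / (1 - gamma)"
    and pmin_def: "pmin = real N * emin / (1 - gamma)"
  shows "(action_equilibrium N Nb beta gamma emin emax pbar 1 1 \<longleftrightarrow> pmax \<le> pbar) \<and>
         (pmax \<le> pbar \<longrightarrow> stable_equilibrium N Nb beta gamma emin emax pbar (\<lambda>_. 1) pmax 1 1) \<and>
         (action_equilibrium N Nb beta gamma emin emax pbar (-1) (-1) \<longleftrightarrow> pmin \<ge> pbar) \<and>
         (pmin \<ge> pbar \<longrightarrow> stable_equilibrium N Nb beta gamma emin emax pbar (\<lambda>_. -1) pmin (-1) (-1))"
proof -
  have b: "0 \<le> beta" "beta \<le> 1" using beta by auto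
  have g1: "1 - gamma > 0" using gamma by simp
  have emx: "pmax \<le> pbar \<longleftrightarrow> real N * emax \<le> (1-gamma)*pbar"
    unfolding pmax_def pos_divide_le_eq[OF g1] by (metis mult.commute)
  have emn: "pmin \<ge> pbar \<longleftrightarrow> real N * emin \<ge> (1-gamma)*pbar"
    unfolding pmin_def pos_le_divide_eq[OF g1] by (metis mult.commute)
  have A: "action_equilibrium N Nb beta gamma emin emax pbar 1 1 \<longleftrightarrow> pmax \<le> pbar"
  proof
    assume "action_equilibrium N Nb beta gamma emin emax pbar 1 1"
    then show "pmax \<le> pbar"
    proof (rule contrapos_pp)
      assume "\<not> pmax \<le> pbar"
      then have "real N * emax > (1-gamma)*pbar" using emx by linarith
      then show "\<not> action_equilibrium N Nb beta gamma emin emax pbar 1 1" by (rule cex1[OF gamma])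
    qed
  next
    assume "pmax \<le> pbar"
    then have pm: "real N * emax \<le> (1-gamma)*pbar" using emx by simp
    show "action_equilibrium N Nb beta gamma emin emax pbar 1 1"
      unfolding action_equilibrium_def
    proof (intro allI impI)
      fix th p q qp k0 k
      assume h: "model_traj N Nb beta gamma emin emax pbar th p q qp \<and> fully_synchronized N (th 0)"
        "actions_are N q qp k0 1 1" "k0 < k"
      have "actions_are N q qp (k0 + (k - k0)) 1 1"
        by (rule fwd1[OF conjunct1[OF h(1)] Nb b gamma pm h(2)])
      then show "actions_are N q qp k 1 1" using h by simp
    qed
  qed
  have C: "action_equilibrium N Nb beta gamma emin emax pbar (-1) (-1) \<longleftrightarrow> pmin \<ge> pbar"
  proof
    assume "action_equilibrium N Nb beta gamma emin emax pbar (-1) (-1)"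
    then show "pmin \<ge> pbar"
    proof (rule contrapos_pp)
      assume "\<not> pmin \<ge> pbar"
      then have "real N * emin < (1-gamma)*pbar" using emn by linarith
      then show "\<not> action_equilibrium N Nb beta gamma emin emax pbar (-1) (-1)" by (rule cexm[OF gamma])
    qed
  next
    assume "pmin \<ge> pbar"
    then have pm: "real N * emin \<ge> (1-gamma)*pbar" using emn by simp
    show "action_equilibrium N Nb beta gamma emin emax pbar (-1) (-1)"
      unfolding action_equilibrium_def
    proof (intro allI impI)
      fix th p q qp k0 k
      assume h: "model_traj N Nb beta gamma emin emax pbar th p q qp \<and> fully_synchronized N (th 0)"
        "actions_are N q qp k0 (-1) (-1)" "k0 < k"
      have "actions_are N q qp (k0 + (k - k0)) (-1) (-1)"
        by (rule fwdm[OF conjunct1[OF h(1)] Nb b gamma pm h(2)])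
      then show "actions_are N q qp k (-1) (-1)" using h by simp
    qed
  qed
  have B: "stable_equilibrium N Nb beta gamma emin emax pbar (\<lambda>_. 1) pmax 1 1" if pp: "pmax \<le> pbar"
  proof -
    have pm: "real N * emax \<le> (1-gamma)*pbar" using emx pp by simp
    have fp: "coupled_fixed_point N Nb beta gamma emin emax pbar (\<lambda>_. 1) pmax 1 1"
    proof -
      have "p_step N gamma emin emax pmax (\<lambda>_. 1) = pmax"
        unfolding p_step_def emission_def pmax_def using g1 by (simp add: field_simps)
      moreover have "signal pbar pmax 1 = 1" using pp by (simp add: signal_def)
      moreover have "theta_step Nb beta (\<lambda>_. 1) (\<lambda>_. 1) 1 i = 1" for i by (simp add: theta_step_def)
      moreover have "act 1 1 = 1" by (simp add: act_def)
      ultimately show ?thesis unfolding coupled_fixed_point_def by simp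
    qed
    have ls: "lyapunov_stable N Nb beta gamma emin emax pbar (\<lambda>_. 1) pmax 1 1"
      unfolding lyapunov_stable_def
    proof (intro allI impI)
      fix e :: real assume e: "e > 0"
      show "\<exists>d>0. \<forall>th p q qp k0. model_traj N Nb beta gamma emin emax pbar th p q qp \<and>
        fully_synchronized N (th 0) \<and> actions_are N q qp k0 1 1 \<and>
        (\<forall>i\<in>{1..N}. \<bar>th k0 i - 1\<bar> < d) \<and> \<bar>p k0 - pmax\<bar> < d \<longrightarrow>
        (\<forall>k\<ge>k0. (\<forall>i\<in>{1..N}. \<bar>th k i - 1\<bar> < e) \<and> \<bar>p k - pmax\<bar> < e)"
      proof (rule exI[of _ e], intro conjI[OF e] allI impI)
        fix th p q qp k0 k
        assume h: "model_traj N Nb beta gamma emin emax pbar th p q qp \<and>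
          fully_synchronized N (th 0) \<and> actions_are N q qp k0 1 1 \<and>
          (\<forall>i\<in>{1..N}. \<bar>th k0 i - 1\<bar> < e) \<and> \<bar>p k0 - pmax\<bar> < e" and kk: "k0 \<le> k"
        have st: "(\<forall>i\<in>{1..N}. th k0 i \<le> th (k0+(k-k0)) i \<and> th (k0+(k-k0)) i \<le> 1) \<and>
            \<bar>p (k0+(k-k0)) - pmax\<bar> \<le> \<bar>p k0 - pmax\<bar>"
          by (rule stab1[OF conjunct1[OF h] Nb b gamma pm conjunct1[OF conjunct2[OF conjunct2[OF h]]] pmax_def])
        then have st': "(\<forall>i\<in>{1..N}. th k0 i \<le> th k i \<and> th k i \<le> 1) \<and> \<bar>p k - pmax\<bar> \<le> \<bar>p k0 - pmax\<bar>"
          using kk by simp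
        show "(\<forall>i\<in>{1..N}. \<bar>th k i - 1\<bar> < e) \<and> \<bar>p k - pmax\<bar> < e"
        proof (intro conjI ballI)
          fix i assume i: "i \<in> {1..N}"
          have "th k0 i \<le> th k i" "th k i \<le> 1" "\<bar>th k0 i - 1\<bar> < e" using st' h i by auto
          then show "\<bar>th k i - 1\<bar> < e" by (simp add: abs_le_iff abs_less_iff)
        next
          show "\<bar>p k - pmax\<bar> < e" using st' h by linarith
        qed
      qed
    qed
    show ?thesis unfolding stable_equilibrium_def using fp ls by simp
  qed
  have D: "stable_equilibrium N Nb beta gamma emin emax pbar (\<lambda>_. -1) pmin (-1) (-1)" if pp: "pmin \<ge> pbar"
  proof -
    have pm: "real N * emin \<ge> (1-gamma)*pbar" using emn pp by simp
    have fp: "coupled_fixed_point N Nb beta gamma emin emax pbar (\<lambda>_. -1) pmin (-1) (-1)"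
    proof -
      have "p_step N gamma emin emax pmin (\<lambda>_. -1) = pmin"
        unfolding p_step_def emission_def pmin_def using g1 by (simp add: field_simps)
      moreover have "signal pbar pmin (-1) = -1" using pp by (simp add: signal_def)
      moreover have "theta_step Nb beta (\<lambda>_. -1) (\<lambda>_. -1) (-1) i = -1" for i by (simp add: theta_step_def)
      moreover have "act (-1) (-1) = -1" by (simp add: act_def)
      ultimately show ?thesis unfolding coupled_fixed_point_def by simp
    qed
    have ls: "lyapunov_stable N Nb beta gamma emin emax pbar (\<lambda>_. -1) pmin (-1) (-1)"
      unfolding lyapunov_stable_def
    proof (intro allI impI)
      fix e :: real assume e: "e > 0"
      show "\<exists>d>0. \<forall>th p q qp k0. model_traj N Nb beta gamma emin emax pbar th p q qp \<and>
        fully_synchronized N (th 0) \<and> actions_are N q qp k0 (-1) (-1) \<and>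
        (\<forall>i\<in>{1..N}. \<bar>th k0 i - -1\<bar> < d) \<and> \<bar>p k0 - pmin\<bar> < d \<longrightarrow>
        (\<forall>k\<ge>k0. (\<forall>i\<in>{1..N}. \<bar>th k i - -1\<bar> < e) \<and> \<bar>p k - pmin\<bar> < e)"
      proof (rule exI[of _ e], intro conjI[OF e] allI impI)
        fix th p q qp k0 k
        assume h: "model_traj N Nb beta gamma emin emax pbar th p q qp \<and>
          fully_synchronized N (th 0) \<and> actions_are N q qp k0 (-1) (-1) \<and>
          (\<forall>i\<in>{1..N}. \<bar>th k0 i - -1\<bar> < e) \<and> \<bar>p k0 - pmin\<bar> < e" and kk: "k0 \<le> k"
        have st: "(\<forall>i\<in>{1..N}. th (k0+(k-k0)) i \<le> th k0 i \<and> -1 \<le> th (k0+(k-k0)) i) \<and>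
            \<bar>p (k0+(k-k0)) - pmin\<bar> \<le> \<bar>p k0 - pmin\<bar>"
          by (rule stabm[OF conjunct1[OF h] Nb b gamma pm conjunct1[OF conjunct2[OF conjunct2[OF h]]] pmin_def])
        then have st': "(\<forall>i\<in>{1..N}. th k i \<le> th k0 i \<and> -1 \<le> th k i) \<and> \<bar>p k - pmin\<bar> \<le> \<bar>p k0 - pmin\<bar>"
          using kk by simp
        show "(\<forall>i\<in>{1..N}. \<bar>th k i - -1\<bar> < e) \<and> \<bar>p k - pmin\<bar> < e"
        proof (intro conjI ballI)
          fix i assume i: "i \<in> {1..N}"
          have "th k i \<le> th k0 i" "-1 \<le> th k i" "\<bar>th k0 i - -1\<bar> < e" using st' h i by auto
          then show "\<bar>th k i - -1\<bar> < e" by (simp add: abs_le_iff abs_less_iff)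
        next
          show "\<bar>p k - pmin\<bar> < e" using st' h by linarith
        qed
      qed
    qed
    show ?thesis unfolding stable_equilibrium_def using fp ls by simp
  qed
  show ?thesis using A B C D by blast
qed

end
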